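(* Fix any total budget $\mathrm{TB}\in\mathbb N_0$. For all integers $n,m\in\mathbb Z$, the disjunctive sum of the integer game forms $(n)+(m)$ equals the integer game form $(n+m)$.
   Context: Game forms are defined recursively: $G=\{G^{\mathcal L}\mid G^{\mathcal R}\}$ with finite sets of Left and Right options, and finite birthday. Integer game forms: $(0)=\{\varnothing\mid\varnothing\}$; for $n\in\mathbb N$, $(n)=\{(n-1)\mid\varnothing\}$ and $(-n)=\overline{(n)}=\{\varnothing\mid(-(n-1))\}$, where the conjugate is $\bar G=\{\overline{G^{\mathcal R}}\mid\overline{G^{\mathcal L}}\}$. The budget set for total budget $\mathrm{TB}$ is $\mathcal B=\{0,\dots,\mathrm{TB},\hat 0,\dots,\widehat{\mathrm{TB}}\}$: state $p$ (resp. $\hat p$) means Left holds $p$ dollars and Right holds $\mathrm{TB}-p$, and Right (resp. Left) holds the tie-breaking marker. Play of $(G,\tilde p)$: at every position (terminal ones included) both players bid simultaneously, Left $\ell\in\{0,\dots,p\}$, Right $r\in\{0,\dots,\mathrm{TB}-p\}$. If Left holds the marker (state $\hat p$): if $\ell>r$ Left moves to $(G^L,\widehat{p-\ell})$, or, including the marker (allowed when $\ell\ge r$), to $(G^L,p-\ell)$; if $\ell=r$ Left wins, the marker passes to Right, play continues at $(G^L,p-\ell)$; if $\ell<r$ Right moves to $(G^R,\widehat{p+r})$. Symmetrically when Right holds the marker (state $p$): if $r>\ell$ Right moves to $(G^R,p+r)$ or, including the marker, to $(G^R,\widehat{p+r})$; if $r=\ell$ Right wins, the marker passes to Left, play continues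 at $(G^R,\widehat{p+r})$; if $r<\ell$ Left moves to $(G^L,p-\ell)$. A player who wins a bid but has no option loses. $o(G,\tilde p)\in\{\mathrm L,\mathrm R\}$ is the winner under optimal play; $\mathrm L>\mathrm R$. Disjunctive sum $G+H=\{G^{\mathcal L}+H,G+H^{\mathcal L}\mid G^{\mathcal R}+H,G+H^{\mathcal R}\}$. $G\ge H$ means $o(G+X,\tilde p)\ge o(H+X,\tilde p)$ for all game forms $X$ and all $\tilde p\in\mathcal B$; $G=H$ means $G\ge H$ and $H\ge G$. *)

theory Defs
  imports Main "HOL-Library.FSet"
begin

datatype game = Game (lopts: "game fset") (ropts: "game fset")

primrec conj :: "game \<Rightarrow> game" where
  "conj (Game L R) = Game (fimage conj R) (fimage conj L)"

primrec nat_game :: "nat \<Rightarrow> game" where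
  "nat_game 0 = Game {||} {||}"
| "nat_game (Suc n) = Game {|nat_game n|} {||}"

definition int_game :: "int \<Rightarrow> game" where
  "int_game n = (if 0 \<le> n then nat_game (nat n) else conj (nat_game (nat (- n))))"

text \<open>Disjunctive sum. Auxiliary: recursion on the second summand H, given
  the functions (\<lambda>H. G^L + H), (\<lambda>H. G^R + H) for the options of a fixed G.\<close>
primrec sum_aux :: "(game \<Rightarrow> game) fset \<Rightarrow> (game \<Rightarrow> game) fset \<Rightarrow> game \<Rightarrow> game" where
  "sum_aux FL FR (Game HL HR) =
     Game (fimage (\<lambda>f. f (Game HL HR)) FL |\<union>| fimage (sum_aux FL FR) HL)
          (fimage (\<lambda>f. f (Game HL HR)) FR |\<union>| fimage (sum_aux FL FR) HR)"

primrec game_plus :: "game \<Rightarrow> game \<Rightarrow> game" where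
  "game_plus (Game GL GR) = sum_aux (fimage game_plus GL) (fimage game_plus GR)"

text \<open>Outcome of bidding play. outcome G TB p lm: Left holds p dollars, Right
  holds TB - p, and lm is True iff Left holds the tie-breaking marker (state \<open>p\<close> hat).
  Result True means Left wins (L), False means Right wins (R).\<close>
primrec outcome :: "game \<Rightarrow> nat \<Rightarrow> nat \<Rightarrow> bool \<Rightarrow> bool" where
  "outcome (Game L R) = (let OL = fimage outcome L; OR = fimage outcome R in
     (\<lambda>TB p lm.
       (\<exists>l\<le>p. \<forall>r\<le>TB - p.
          (if lm then
             (if r < l then fBex OL (\<lambda>f. f TB (p - l) True \<or> f TB (p - l) False)
              else if l = r then fBex OL (\<lambda>f. f TB (p - l) False)
              else fBall OR (\<lambda>f. f TB (p + r) True))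
           else
             (if l < r then fBall OR (\<lambda>f. f TB (p + r) False \<and> f TB (p + r) True)
              else if l = r then fBall OR (\<lambda>f. f TB (p + r) True)
              else fBex OL (\<lambda>f. f TB (p - l) False))))))"

definition game_geq :: "nat \<Rightarrow> game \<Rightarrow> game \<Rightarrow> bool" where
  "game_geq TB G H = (\<forall>X p lm. p \<le> TB \<longrightarrow>
      (outcome (game_plus H X) TB p lm \<longrightarrow> outcome (game_plus G X) TB p lm))"

definition game_eq :: "nat \<Rightarrow> game \<Rightarrow> game \<Rightarrow> bool" where
  "game_eq TB G H = (game_geq TB G H \<and> game_geq TB H G)"

end

theory Submission
  imports Defs
begin
lemma plus_simp: "game_plus G H = Game ((\<lambda>g. game_plus g H) |`| lopts G |\<union>| (\<lambda>h. game_plus G h) |`| lopts H)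
   ((\<lambda>g. game_plus g H) |`| ropts G |\<union>| (\<lambda>h. game_plus G h) |`| ropts H)"
  apply (cases G; cases H) apply (simp add: fset.map_comp o_def)
  done

declare game_plus.simps[simp del] sum_aux.simps[simp del]

lemma game_eqI: "lopts a = lopts b \<Longrightarrow> ropts a = ropts b \<Longrightarrow> a = b"
  by (cases a; cases b) auto

definition LW :: "nat \<Rightarrow> game \<Rightarrow> nat \<Rightarrow> bool \<Rightarrow> bool" where
  "LW TB G q m \<longleftrightarrow> (\<exists>g. g |\<in>| lopts G \<and> outcome g TB q m)"
definition RW :: "nat \<Rightarrow> game \<Rightarrow> nat \<Rightarrow> bool \<Rightarrow> bool" where
  "RW TB G q m \<longleftrightarrow> (\<forall>g. g |\<in>| ropts G \<longrightarrow> outcome g TB q m)"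
definition Cs :: "(nat \<Rightarrow> bool \<Rightarrow> bool) \<Rightarrow> (nat \<Rightarrow> bool \<Rightarrow> bool) \<Rightarrow> nat \<Rightarrow> bool \<Rightarrow> nat \<Rightarrow> nat \<Rightarrow> bool" where
  "Cs lw rw p lm l r = (if lm then (if r < l then lw (p-l) True \<or> lw (p-l) False
        else if l = r then lw (p-l) False else rw (p+r) True)
     else (if l < r then rw (p+r) False \<and> rw (p+r) True
        else if l = r then rw (p+r) True else lw (p-l) False))"
definition Out :: "(nat \<Rightarrow> bool \<Rightarrow> bool) \<Rightarrow> (nat \<Rightarrow> bool \<Rightarrow> bool) \<Rightarrow> nat \<Rightarrow> nat \<Rightarrow> bool \<Rightarrow> bool" where
  "Out lw rw TB p lm = (\<exists>l\<le>p. \<forall>r\<le>TB-p. Cs lw rw p lm l r)"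
lemma fBex_eq: "fBex A P = (\<exists>x. x |\<in>| A \<and> P x)" by (auto intro: fBexI elim: fBexE)
lemma fBall_eq: "fBall A P = (\<forall>x. x |\<in>| A \<longrightarrow> P x)" by (auto intro: fBallI dest: fbspec)
lemma LW_Game: "LW TB (Game L R) = (\<lambda>q m. fBex (outcome |`| L) (\<lambda>f. f TB q m))"
  by (auto simp: LW_def fBex_eq fun_eq_iff)
lemma RW_Game: "RW TB (Game L R) = (\<lambda>q m. fBall (outcome |`| R) (\<lambda>f. f TB q m))"
  by (auto simp: RW_def fBall_eq fun_eq_iff)
lemma fBex_disj: "fBex A (\<lambda>x. P x \<or> Q x) = (fBex A P \<or> fBex A Q)" by (auto simp: fBex_eq)
lemma fBall_conj: "fBall A (\<lambda>x. P x \<and> Q x) = (fBall A P \<and> fBall A Q)" by (auto simp: fBall_eq)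
lemma outcome_Out: "outcome G TB p lm = Out (LW TB G) (RW TB G) TB p lm"
  apply (cases G)
  apply (simp only: outcome.simps Let_def Out_def Cs_def LW_Game RW_Game fBex_disj fBall_conj)
  done

declare outcome.simps[simp del]

lemma M_same: "outcome H TB p m \<Longrightarrow> p \<le> q \<Longrightarrow> q \<le> TB \<Longrightarrow> outcome H TB q m"
proof (induction H arbitrary: p q m)
  case (Game L R)
  let ?H = "Game L R"
  have lw: "LW TB ?H y mm" if "LW TB ?H x mm" "x \<le> y" "y \<le> TB" for x y mm
    using that Game.IH(1) by (auto simp: LW_def)
  have rw: "RW TB ?H y mm" if "RW TB ?H x mm" "x \<le> y" "y \<le> TB" for x y mm
    using that Game.IH(2) by (auto simp: RW_def)
  from Game.prems obtain l where l: "l \<le> p" "\<forall>r\<le>TB-p. Cs (LW TB ?H) (RW TB ?H) p m l r"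
    by (auto simp: outcome_Out Out_def)
  show ?case unfolding outcome_Out Out_def
  proof (intro exI[of _ l] conjI allI impI)
    show "l \<le> q" using l Game.prems by simp
    fix r assume r: "r \<le> TB - q"
    then have c: "Cs (LW TB ?H) (RW TB ?H) p m l r" using l Game.prems by auto
    have b: "p - l \<le> q - l" "q - l \<le> TB" "p + r \<le> q + r" "q + r \<le> TB" using r Game.prems by auto
    show "Cs (LW TB ?H) (RW TB ?H) q m l r"
      using c b lw rw unfolding Cs_def by (auto split: if_splits)
  qed
qed

lemma Qp:
  assumes S: "\<And>H H'. S H H' \<Longrightarrow> (\<forall>h. h |\<in>| lopts H \<longrightarrow> (\<exists>h'. h' |\<in>| lopts H' \<and> S h h'))
       \<and> H |\<in>| lopts H' \<and> (\<forall>h'. h' |\<in>| ropts H' \<longrightarrow> (\<exists>h. h |\<in>| ropts H \<and> S h h'))"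
  shows "S H H' \<Longrightarrow> outcome H TB p lm \<Longrightarrow> p \<le> q \<Longrightarrow> q \<le> TB \<Longrightarrow> (lm \<longrightarrow> lm') \<Longrightarrow> outcome H' TB q lm'"
proof (induction H arbitrary: H' p q lm lm')
  case (Game L R)
  let ?H = "Game L R"
  note SH = S[OF Game.prems(1)]
  have lw: "LW TB H' y m'" if "LW TB ?H x m" "x \<le> y" "y \<le> TB" "m \<longrightarrow> m'" for x y m m'
  proof -
    from that(1) obtain h where h: "h |\<in>| L" "outcome h TB x m" by (auto simp: LW_def)
    with SH obtain h' where "h' |\<in>| lopts H'" "S h h'" by auto
    with Game.IH(1)[OF h(1) \<open>S h h'\<close> h(2)] that show ?thesis by (auto simp: LW_def)
  qed
  have rw: "RW TB H' y m'" if "RW TB ?H x m" "x \<le> y" "y \<le> TB" "m \<longrightarrow> m'" for x y m m'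
    unfolding RW_def
  proof (intro allI impI)
    fix h' assume "h' |\<in>| ropts H'"
    with SH obtain h where h: "h |\<in>| R" "S h h'" by auto
    with that have "outcome h TB x m" by (auto simp: RW_def)
    from Game.IH(2)[OF h(1) h(2) this] that show "outcome h' TB y m'" by auto
  qed
  have lws: "\<And>x y m. LW TB ?H x m \<Longrightarrow> x \<le> y \<Longrightarrow> y \<le> TB \<Longrightarrow> LW TB H' y m" using lw by blast
  have rws: "\<And>x y m. RW TB ?H x m \<Longrightarrow> x \<le> y \<Longrightarrow> y \<le> TB \<Longrightarrow> RW TB H' y m" using rw by blast
  have pass: "LW TB H' y m" if "outcome ?H TB y m" for y m
    using SH that by (auto simp: LW_def)
  from Game.prems obtain l where l: "l \<le> p" "\<forall>r\<le>TB-p. Cs (LW TB ?H) (RW TB ?H) p lm l r"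
    by (auto simp: outcome_Out Out_def)
  show ?case
  proof (cases "lm = lm'")
    case True
    show ?thesis unfolding outcome_Out Out_def
    proof (intro exI[of _ l] conjI allI impI)
      show "l \<le> q" using l Game.prems by simp
      fix r assume r: "r \<le> TB - q"
      then have c: "Cs (LW TB ?H) (RW TB ?H) p lm l r" using l Game.prems by auto
      have b: "p - l \<le> q - l" "q - l \<le> TB" "p + r \<le> q + r" "q + r \<le> TB" using r Game.prems by auto
      show "Cs (LW TB H') (RW TB H') q lm' l r"
        using c b lws rws True
        unfolding Cs_def by (auto split: if_splits)
    qed
  next
    case False
    with Game.prems have lmF: "\<not> lm" "lm'" by auto
    show ?thesis
    proof (cases "l = 0")
      case False
      show ?thesis unfolding outcome_Out Out_def
      proof (intro exI[of _ "l - 1"] conjI allI impI)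
        show "l - 1 \<le> q" using l Game.prems by simp
        fix r assume r: "r \<le> TB - q"
        then have c: "Cs (LW TB ?H) (RW TB ?H) p lm l r" using l Game.prems by auto
        have b: "p - l \<le> q - (l - 1)" "q - (l-1) \<le> TB" "p + r \<le> q + r" "q + r \<le> TB" using r Game.prems l False by auto
        show "Cs (LW TB H') (RW TB H') q lm' (l - 1) r"
          using c b lws rws lmF False
          unfolding Cs_def by (auto split: if_splits)
      qed
    next
      case True
      show ?thesis unfolding outcome_Out Out_def
      proof (intro exI[of _ 0] conjI allI impI)
        show "0 \<le> q" by simp
        fix r assume r: "r \<le> TB - q"
        then have c: "Cs (LW TB ?H) (RW TB ?H) p lm l r" using l Game.prems by auto
        have b: "p + r \<le> q + r" "q + r \<le> TB" using r Game.prems by auto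
        have o: "outcome ?H TB q False" using M_same[OF Game.prems(2)] Game.prems lmF by auto
        show "Cs (LW TB H') (RW TB H') q lm' 0 r"
          using c b pass[OF o] rws lmF True
          unfolding Cs_def by (auto split: if_splits)
      qed
    qed
  qed
qed

lemma Qm:
  assumes S: "\<And>H H'. S H H' \<Longrightarrow> (\<forall>h'. h' |\<in>| lopts H' \<longrightarrow> (\<exists>h. h |\<in>| lopts H \<and> S h h'))
       \<and> H |\<in>| ropts H' \<and> (\<forall>h. h |\<in>| ropts H \<longrightarrow> (\<exists>h'. h' |\<in>| ropts H' \<and> S h h'))"
  shows "S H H' \<Longrightarrow> outcome H' TB p' lm' \<Longrightarrow> p' \<le> p \<Longrightarrow> p \<le> TB \<Longrightarrow> (lm' \<longrightarrow> lm) \<Longrightarrow> outcome H TB p lm"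
proof (induction H arbitrary: H' p p' lm lm')
  case (Game L R)
  let ?H = "Game L R"
  note SH = S[OF Game.prems(1)]
  have lws: "LW TB ?H y m" if "LW TB H' x m" "x \<le> y" "y \<le> TB" for x y m
  proof -
    from that(1) obtain h' where h': "h' |\<in>| lopts H'" "outcome h' TB x m" by (auto simp: LW_def)
    with SH obtain h where h: "h |\<in>| L" "S h h'" by auto
    with Game.IH(1)[OF h(1) h(2) h'(2)] that show ?thesis by (auto simp: LW_def)
  qed
  have rws: "RW TB ?H y m" if "RW TB H' x m" "x \<le> y" "y \<le> TB" for x y m
    unfolding RW_def
  proof (intro allI impI)
    fix h assume "h |\<in>| ropts ?H"
    with SH obtain h' where h': "h' |\<in>| ropts H'" "S h h'" by auto
    with that have "outcome h' TB x m" by (auto simp: RW_def)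
    from Game.IH(2)[OF _ h'(2) this] \<open>h |\<in>| ropts ?H\<close> that show "outcome h TB y m" by auto
  qed
  have pass: "outcome ?H TB y m" if "RW TB H' y m" for y m
    using SH that by (auto simp: RW_def)
  from Game.prems obtain l where l: "l \<le> p'" "\<forall>r\<le>TB-p'. Cs (LW TB H') (RW TB H') p' lm' l r"
    by (auto simp: outcome_Out Out_def)
  show ?case
  proof (cases "lm = lm'")
    case True
    show ?thesis unfolding outcome_Out Out_def
    proof (intro exI[of _ l] conjI allI impI)
      show "l \<le> p" using l Game.prems by simp
      fix r assume r: "r \<le> TB - p"
      then have c: "Cs (LW TB H') (RW TB H') p' lm' l r" using l Game.prems by auto
      have b: "p' - l \<le> p - l" "p - l \<le> TB" "p' + r \<le> p + r" "p + r \<le> TB" using r Game.prems by auto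
      show "Cs (LW TB ?H) (RW TB ?H) p lm l r"
        using c b lws rws True
        unfolding Cs_def by (auto split: if_splits)
    qed
  next
    case False
    with Game.prems have lmF: "lm" "\<not> lm'" by auto
    show ?thesis
    proof (cases "l = 0")
      case False
      show ?thesis unfolding outcome_Out Out_def
      proof (intro exI[of _ "l - 1"] conjI allI impI)
        show "l - 1 \<le> p" using l Game.prems by simp
        fix r assume r: "r \<le> TB - p"
        then have c: "Cs (LW TB H') (RW TB H') p' lm' l r" using l Game.prems by auto
        have b: "p' - l \<le> p - (l - 1)" "p - (l-1) \<le> TB" "p' + r \<le> p + r" "p + r \<le> TB" using r Game.prems l False by auto
        show "Cs (LW TB ?H) (RW TB ?H) p lm (l - 1) r"
          using c b lws rws lmF False
          unfolding Cs_def by (auto split: if_splits)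
      qed
    next
      case True
      have "Cs (LW TB H') (RW TB H') p' lm' l 0" using l by auto
      then have "RW TB H' p' True" using True lmF by (simp add: Cs_def)
      then have "outcome ?H TB p' True" by (rule pass)
      then show ?thesis using M_same[of ?H TB p' True p] Game.prems lmF by auto
    qed
  qed
qed

lemma Out_cong:
  assumes "\<And>q m. q \<le> TB \<Longrightarrow> lw q m = lw' q m" "\<And>q m. q \<le> TB \<Longrightarrow> rw q m = rw' q m" "p \<le> TB"
  shows "Out lw rw TB p lm = Out lw' rw' TB p lm"
proof -
  have "Cs lw rw p lm l r = Cs lw' rw' p lm l r" if "l \<le> p" "r \<le> TB - p" for l r
    using that assms unfolding Cs_def by auto
  then show ?thesis unfolding Out_def by (meson order.trans)
qed

lemma ext_opts:
  assumes p: "p \<le> TB"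
    and hA: "\<And>q m. q \<le> p \<Longrightarrow> (m \<longrightarrow> lm) \<Longrightarrow> A q m \<Longrightarrow> outcome H TB p lm"
    and hB: "\<And>q m. p \<le> q \<Longrightarrow> q \<le> TB \<Longrightarrow> (lm \<longrightarrow> m) \<Longrightarrow> outcome H TB p lm \<Longrightarrow> B q m"
  shows "Out (\<lambda>q m. LW TB H q m \<or> A q m) (\<lambda>q m. RW TB H q m \<and> B q m) TB p lm = outcome H TB p lm"
proof
  assume o: "outcome H TB p lm"
  then obtain l where l: "l \<le> p" "\<forall>r\<le>TB-p. Cs (LW TB H) (RW TB H) p lm l r"
    by (auto simp: outcome_Out Out_def)
  show "Out (\<lambda>q m. LW TB H q m \<or> A q m) (\<lambda>q m. RW TB H q m \<and> B q m) TB p lm"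
    unfolding Out_def
  proof (intro exI[of _ l] conjI allI impI)
    show "l \<le> p" by fact
    fix r assume r: "r \<le> TB - p"
    then have c: "Cs (LW TB H) (RW TB H) p lm l r" using l by auto
    have b1: "B (p + r) True" using hB[of "p+r" True] r p o by auto
    have b2: "\<not> lm \<Longrightarrow> B (p + r) False" using hB[of "p+r" False] r p o by auto
    show "Cs (\<lambda>q m. LW TB H q m \<or> A q m) (\<lambda>q m. RW TB H q m \<and> B q m) p lm l r"
      using c b1 b2 unfolding Cs_def by (auto split: if_splits)
  qed
next
  assume o: "Out (\<lambda>q m. LW TB H q m \<or> A q m) (\<lambda>q m. RW TB H q m \<and> B q m) TB p lm"
  show "outcome H TB p lm"
  proof (rule ccontr)
    assume no: "\<not> outcome H TB p lm"
    then have nA: "\<And>q m. q \<le> p \<Longrightarrow> (m \<longrightarrow> lm) \<Longrightarrow> \<not> A q m" using hA by blast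
    from o obtain l where l: "l \<le> p" "\<forall>r\<le>TB-p. Cs (\<lambda>q m. LW TB H q m \<or> A q m) (\<lambda>q m. RW TB H q m \<and> B q m) p lm l r"
      by (auto simp: Out_def)
    have "outcome H TB p lm" unfolding outcome_Out Out_def
    proof (intro exI[of _ l] conjI allI impI)
      show "l \<le> p" by fact
      fix r assume r: "r \<le> TB - p"
      then have c: "Cs (\<lambda>q m. LW TB H q m \<or> A q m) (\<lambda>q m. RW TB H q m \<and> B q m) p lm l r" using l by auto
      have a1: "\<not> A (p - l) False" using nA[of "p-l" False] by auto
      have a2: "lm \<Longrightarrow> \<not> A (p - l) True" using nA[of "p-l" True] by auto
      show "Cs (LW TB H) (RW TB H) p lm l r"
        using c a1 a2 unfolding Cs_def by (auto split: if_splits)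
    qed
    with no show False by contradiction
  qed
qed

lemma nat_game_eq: "nat_game n = Game (if 0 < n then {|nat_game (n-1)|} else {||}) {||}"
  by (cases n) auto
lemma conj_nat_eq: "conj (nat_game n) = Game {||} (if 0 < n then {|conj (nat_game (n-1))|} else {||})"
  by (cases n) auto

lemma int_lopts: "lopts (int_game k) = (if 0 < k then {|int_game (k-1)|} else {||})"
proof (cases "0 < k")
  case True
  then have "nat k = Suc (nat (k-1))" by simp
  then show ?thesis using True by (simp add: int_game_def)
next
  case False
  then show ?thesis by (simp add: int_game_def conj_nat_eq nat_game_eq)
qed

lemma int_ropts: "ropts (int_game k) = (if k < 0 then {|int_game (k+1)|} else {||})"
proof (cases "k < 0")
  case True
  then have n: "nat (-k) = Suc (nat (-k-1))" by simp
  show ?thesis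
  proof (cases "k = -1")
    case True
    then show ?thesis by (simp add: int_game_def)
  next
    case False
    with \<open>k<0\<close> have "nat (-(k+1)) = nat (-k-1)" "\<not> 0 \<le> k+1" by auto
    then show ?thesis using True n by (simp add: int_game_def)
  qed
next
  case False
  then show ?thesis by (simp add: int_game_def nat_game_eq)
qed

lemma plus_lopts: "lopts (game_plus G H) = (\<lambda>g. game_plus g H) |`| lopts G |\<union>| (\<lambda>h. game_plus G h) |`| lopts H"
  by (subst plus_simp) simp
lemma plus_ropts: "ropts (game_plus G H) = (\<lambda>g. game_plus g H) |`| ropts G |\<union>| (\<lambda>h. game_plus G h) |`| ropts H"
  by (subst plus_simp) simp

lemma plus_comm: "game_plus G H = game_plus H G"
proof (induction G arbitrary: H)
  case (Game GL GR)
  note IHG = Game.IH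
  show ?case
  proof (induction H)
    case (Game HL HR)
    have a: "(\<lambda>g. game_plus g (Game HL HR)) |`| GL = (\<lambda>g. game_plus (Game HL HR) g) |`| GL"
      using IHG(1) by (intro fset.map_cong0) auto
    have b: "(\<lambda>g. game_plus g (Game HL HR)) |`| GR = (\<lambda>g. game_plus (Game HL HR) g) |`| GR"
      using IHG(2) by (intro fset.map_cong0) auto
    have c: "(\<lambda>h. game_plus (Game GL GR) h) |`| HL = (\<lambda>h. game_plus h (Game GL GR)) |`| HL"
      using Game.IH(1) by (intro fset.map_cong0) auto
    have d: "(\<lambda>h. game_plus (Game GL GR) h) |`| HR = (\<lambda>h. game_plus h (Game GL GR)) |`| HR"
      using Game.IH(2) by (intro fset.map_cong0) auto
    show ?case
      by (rule game_eqI) (simp_all add: plus_lopts plus_ropts a b c d sup_commute)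
  qed
qed

lemma nat_lopts: "lopts (nat_game n) = (if 0 < n then {|nat_game (n-1)|} else {||})"
  by (subst nat_game_eq) simp
lemma nat_ropts: "ropts (nat_game n) = {||}"
  by (subst nat_game_eq) simp
lemma conj_lopts: "lopts (conj (nat_game n)) = {||}"
  by (subst conj_nat_eq) simp
lemma conj_ropts: "ropts (conj (nat_game n)) = (if 0 < n then {|conj (nat_game (n-1))|} else {||})"
  by (subst conj_nat_eq) simp

lemma nat_add: "game_plus (nat_game a) (nat_game b) = nat_game (a + b)"
proof (induction "a+b" arbitrary: a b rule: less_induct)
  case less
  have i1: "0 < a \<Longrightarrow> game_plus (nat_game (a-1)) (nat_game b) = nat_game (a+b-1)"
    using less[of "a-1" b] by simp
  have i2: "0 < b \<Longrightarrow> game_plus (nat_game a) (nat_game (b-1)) = nat_game (a+b-1)"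
    using less[of a "b-1"] by simp
  show ?case
    by (rule game_eqI) (use i1 i2 in \<open>auto simp: plus_lopts plus_ropts nat_lopts nat_ropts\<close>)
qed

lemma conj_add: "game_plus (conj (nat_game a)) (conj (nat_game b)) = conj (nat_game (a + b))"
proof (induction "a+b" arbitrary: a b rule: less_induct)
  case less
  have i1: "0 < a \<Longrightarrow> game_plus (conj (nat_game (a-1))) (conj (nat_game b)) = conj (nat_game (a+b-1))"
    using less[of "a-1" b] by simp
  have i2: "0 < b \<Longrightarrow> game_plus (conj (nat_game a)) (conj (nat_game (b-1))) = conj (nat_game (a+b-1))"
    using less[of a "b-1"] by simp
  show ?case
    by (rule game_eqI) (use i1 i2 in \<open>auto simp: plus_lopts plus_ropts conj_lopts conj_ropts\<close>)
qed

definition SP :: "game \<Rightarrow> game \<Rightarrow> bool" where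
  "SP H H' \<longleftrightarrow> (\<exists>c G. 0 \<le> c \<and> H = game_plus (int_game c) G \<and> H' = game_plus (int_game (c+1)) G)"
definition SM :: "game \<Rightarrow> game \<Rightarrow> bool" where
  "SM H H' \<longleftrightarrow> (\<exists>c G. c \<le> 0 \<and> H = game_plus (int_game c) G \<and> H' = game_plus (int_game (c-1)) G)"

lemma SP_prop:
  assumes "SP H H'"
  shows "(\<forall>h. h |\<in>| lopts H \<longrightarrow> (\<exists>h'. h' |\<in>| lopts H' \<and> SP h h'))
       \<and> H |\<in>| lopts H' \<and> (\<forall>h'. h' |\<in>| ropts H' \<longrightarrow> (\<exists>h. h |\<in>| ropts H \<and> SP h h'))"
proof -
  from assms obtain c G where c: "0 \<le> c" and H: "H = game_plus (int_game c) G"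
    and H': "H' = game_plus (int_game (c+1)) G" by (auto simp: SP_def)
  have lH: "lopts H = (if 0 < c then {|game_plus (int_game (c-1)) G|} else {||}) |\<union>| (\<lambda>g. game_plus (int_game c) g) |`| lopts G"
    using H by (simp add: plus_lopts int_lopts)
  have lH': "lopts H' = {|game_plus (int_game c) G|} |\<union>| (\<lambda>g. game_plus (int_game (c+1)) g) |`| lopts G"
    using H' c by (simp add: plus_lopts int_lopts)
  have rH': "ropts H' = (\<lambda>g. game_plus (int_game (c+1)) g) |`| ropts G"
    using H' c by (simp add: plus_ropts int_ropts)
  have rH: "ropts H = (\<lambda>g. game_plus (int_game c) g) |`| ropts G"
    using H c by (simp add: plus_ropts int_ropts)
  have 1: "\<exists>h'. h' |\<in>| lopts H' \<and> SP h h'" if "h |\<in>| lopts H" for h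
  proof (cases "0 < c \<and> h = game_plus (int_game (c-1)) G")
    case True
    then show ?thesis unfolding lH' SP_def
      by (intro exI[of _ "game_plus (int_game c) G"]) (auto intro!: exI[of _ "c-1"])
  next
    case False
    with that lH obtain g where g: "g |\<in>| lopts G" "h = game_plus (int_game c) g" by (auto split: if_splits)
    then show ?thesis unfolding lH' SP_def using c
      by (intro exI[of _ "game_plus (int_game (c+1)) g"]) auto
  qed
  have 2: "\<exists>h. h |\<in>| ropts H \<and> SP h h'" if "h' |\<in>| ropts H'" for h'
  proof -
    from that rH' obtain g where g: "g |\<in>| ropts G" "h' = game_plus (int_game (c+1)) g" by auto
    then show ?thesis unfolding rH SP_def using c
      by (intro exI[of _ "game_plus (int_game c) g"]) auto
  qed
  show ?thesis using 1 2 H lH' by auto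
qed

lemma SM_prop:
  assumes "SM H H'"
  shows "(\<forall>h'. h' |\<in>| lopts H' \<longrightarrow> (\<exists>h. h |\<in>| lopts H \<and> SM h h'))
       \<and> H |\<in>| ropts H' \<and> (\<forall>h. h |\<in>| ropts H \<longrightarrow> (\<exists>h'. h' |\<in>| ropts H' \<and> SM h h'))"
proof -
  from assms obtain c G where c: "c \<le> 0" and H: "H = game_plus (int_game c) G"
    and H': "H' = game_plus (int_game (c-1)) G" by (auto simp: SM_def)
  have rH: "ropts H = (if c < 0 then {|game_plus (int_game (c+1)) G|} else {||}) |\<union>| (\<lambda>g. game_plus (int_game c) g) |`| ropts G"
    using H by (simp add: plus_ropts int_ropts)
  have rH': "ropts H' = {|game_plus (int_game c) G|} |\<union>| (\<lambda>g. game_plus (int_game (c-1)) g) |`| ropts G"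
    using H' c by (simp add: plus_ropts int_ropts)
  have lH': "lopts H' = (\<lambda>g. game_plus (int_game (c-1)) g) |`| lopts G"
    using H' c by (simp add: plus_lopts int_lopts)
  have lH: "lopts H = (\<lambda>g. game_plus (int_game c) g) |`| lopts G"
    using H c by (simp add: plus_lopts int_lopts)
  have 1: "\<exists>h'. h' |\<in>| ropts H' \<and> SM h h'" if "h |\<in>| ropts H" for h
  proof (cases "c < 0 \<and> h = game_plus (int_game (c+1)) G")
    case True
    then show ?thesis unfolding rH' SM_def
      by (intro exI[of _ "game_plus (int_game c) G"]) (auto intro!: exI[of _ "c+1"])
  next
    case False
    with that rH obtain g where g: "g |\<in>| ropts G" "h = game_plus (int_game c) g" by (auto split: if_splits)
    then show ?thesis unfolding rH' SM_def using c
      by (intro exI[of _ "game_plus (int_game (c-1)) g"]) auto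
  qed
  have 2: "\<exists>h. h |\<in>| lopts H \<and> SM h h'" if "h' |\<in>| lopts H'" for h'
  proof -
    from that lH' obtain g where g: "g |\<in>| lopts G" "h' = game_plus (int_game (c-1)) g" by auto
    then show ?thesis unfolding lH SM_def using c
      by (intro exI[of _ "game_plus (int_game c) g"]) auto
  qed
  show ?thesis using 1 2 H rH' by auto
qed

lemma main_lemma:
  "p \<le> TB \<Longrightarrow> outcome (game_plus (game_plus (nat_game a) (conj (nat_game b))) G) TB p lm
     = outcome (game_plus (int_game (int a - int b)) G) TB p lm"
proof (induction G arbitrary: a b p lm)
  case (Game GL GR)
  note IHG = Game.IH
  let ?G = "Game GL GR"
  show ?case using Game.prems
  proof (induction "a+b" arbitrary: a b p lm rule: less_induct)
    case less
    define c where "c = int a - int b"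
    define K where "K = game_plus (game_plus (nat_game a) (conj (nat_game b))) ?G"
    define H where "H = game_plus (int_game c) ?G"
    define A where "A = (\<lambda>q m. 0 < a \<and> c \<le> 0 \<and> outcome (game_plus (int_game (c-1)) ?G) TB q m)"
    define B where "B = (\<lambda>q m. 0 < b \<and> 0 \<le> c \<longrightarrow> outcome (game_plus (int_game (c+1)) ?G) TB q m)"
    have lK: "lopts K = (if 0 < a then {|game_plus (game_plus (nat_game (a-1)) (conj (nat_game b))) ?G|} else {||})
        |\<union>| (\<lambda>g. game_plus (game_plus (nat_game a) (conj (nat_game b))) g) |`| GL"
      by (simp add: K_def plus_lopts nat_lopts conj_lopts)
    have rK: "ropts K = (if 0 < b then {|game_plus (game_plus (nat_game a) (conj (nat_game (b-1)))) ?G|} else {||})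
        |\<union>| (\<lambda>g. game_plus (game_plus (nat_game a) (conj (nat_game b))) g) |`| GR"
      by (simp add: K_def plus_ropts nat_ropts conj_ropts)
    have lH: "lopts H = (if 0 < c then {|game_plus (int_game (c-1)) ?G|} else {||}) |\<union>| (\<lambda>g. game_plus (int_game c) g) |`| GL"
      by (simp add: H_def plus_lopts int_lopts)
    have rH: "ropts H = (if c < 0 then {|game_plus (int_game (c+1)) ?G|} else {||}) |\<union>| (\<lambda>g. game_plus (int_game c) g) |`| GR"
      by (simp add: H_def plus_ropts int_ropts)
    have ia: "0 < a \<Longrightarrow> q \<le> TB \<Longrightarrow> outcome (game_plus (game_plus (nat_game (a-1)) (conj (nat_game b))) ?G) TB q m
        = outcome (game_plus (int_game (c-1)) ?G) TB q m" for q m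
    proof -
      assume "0 < a" "q \<le> TB"
      then obtain a' where a': "a = Suc a'" by (cases a) auto
      have e: "int a' - int b = c - 1" using a' by (simp add: c_def)
      have "outcome (game_plus (game_plus (nat_game a') (conj (nat_game b))) ?G) TB q m
          = outcome (game_plus (int_game (int a' - int b)) ?G) TB q m"
        using less.hyps[of a' b q m] a' \<open>q \<le> TB\<close> by simp
      then show ?thesis unfolding e[symmetric] using a' by simp
    qed
    have ib: "0 < b \<Longrightarrow> q \<le> TB \<Longrightarrow> outcome (game_plus (game_plus (nat_game a) (conj (nat_game (b-1)))) ?G) TB q m
        = outcome (game_plus (int_game (c+1)) ?G) TB q m" for q m
    proof -
      assume "0 < b" "q \<le> TB"
      then obtain b' where b': "b = Suc b'" by (cases b) auto
      have e: "int a - int b' = c + 1" using b' by (simp add: c_def)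
      have "outcome (game_plus (game_plus (nat_game a) (conj (nat_game b'))) ?G) TB q m
          = outcome (game_plus (int_game (int a - int b')) ?G) TB q m"
        using less.hyps[of a b' q m] b' \<open>q \<le> TB\<close> by simp
      then show ?thesis unfolding e[symmetric] using b' by simp
    qed
    have ig: "g |\<in>| GL \<or> g |\<in>| GR \<Longrightarrow> q \<le> TB \<Longrightarrow> outcome (game_plus (game_plus (nat_game a) (conj (nat_game b))) g) TB q m
        = outcome (game_plus (int_game c) g) TB q m" for g q m
      using IHG unfolding c_def by blast
    have LWK: "LW TB K q m = (LW TB H q m \<or> A q m)" if "q \<le> TB" for q m
    proof -
      have "c > 0 \<Longrightarrow> a > 0" unfolding c_def by simp
      then show ?thesis using that ia ig unfolding LW_def lK lH A_def
        by (auto split: if_splits)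
    qed
    have RWK: "RW TB K q m = (RW TB H q m \<and> B q m)" if "q \<le> TB" for q m
    proof -
      have "c < 0 \<Longrightarrow> b > 0" unfolding c_def by simp
      then show ?thesis using that ib ig unfolding RW_def rK rH B_def
        by (auto split: if_splits)
    qed
    have "outcome K TB p lm = Out (\<lambda>q m. LW TB H q m \<or> A q m) (\<lambda>q m. RW TB H q m \<and> B q m) TB p lm"
      unfolding outcome_Out by (rule Out_cong) (use LWK RWK less.prems in auto)
    also have "\<dots> = outcome H TB p lm"
    proof (rule ext_opts)
      show "p \<le> TB" by fact
      fix q m assume q: "q \<le> p" "m \<longrightarrow> lm" "A q m"
      then have "c \<le> 0" and o: "outcome (game_plus (int_game (c-1)) ?G) TB q m" by (auto simp: A_def)
      then have sm: "SM H (game_plus (int_game (c-1)) ?G)" unfolding SM_def H_def by blast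
      show "outcome H TB p lm" using Qm[where S=SM, OF SM_prop] sm o q less.prems by blast
    next
      fix q m assume q: "p \<le> q" "q \<le> TB" "lm \<longrightarrow> m" "outcome H TB p lm"
      show "B q m" unfolding B_def
      proof
        assume "0 < b \<and> 0 \<le> c"
        then have sp: "SP H (game_plus (int_game (c+1)) ?G)" unfolding SP_def H_def by blast
        show "outcome (game_plus (int_game (c+1)) ?G) TB q m" using Qp[where S=SP, OF SP_prop] sp q less.prems by blast
      qed
    qed
    finally show ?case unfolding K_def H_def c_def .
  qed
qed

lemma sum_int_eq:
  "p \<le> TB \<Longrightarrow> outcome (game_plus (game_plus (int_game n) (int_game m)) X) TB p lm
     = outcome (game_plus (int_game (n + m)) X) TB p lm"
proof -
  assume p: "p \<le> TB"
  have mixed: "outcome (game_plus (game_plus (int_game n) (int_game m)) X) TB p lm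
     = outcome (game_plus (int_game (n + m)) X) TB p lm" if "0 \<le> n" "m < 0" for n m
  proof -
    have "game_plus (int_game n) (int_game m) = game_plus (nat_game (nat n)) (conj (nat_game (nat (-m))))"
      using that by (simp add: int_game_def)
    moreover have "int (nat n) - int (nat (-m)) = n + m" using that by simp
    ultimately show ?thesis using main_lemma[OF p, of "nat n" "nat (-m)" X lm] by simp
  qed
  show ?thesis
  proof (cases "0 \<le> n")
    case n: True
    show ?thesis
    proof (cases "0 \<le> m")
      case True
      then have "game_plus (int_game n) (int_game m) = int_game (n + m)"
        using n by (simp add: int_game_def nat_add nat_add_distrib)
      then show ?thesis by simp
    next
      case False
      then show ?thesis using mixed n by simp
    qed
  next
    case n: False
    show ?thesis
    proof (cases "0 \<le> m")
      case True
      have "game_plus (int_game n) (int_game m) = game_plus (int_game m) (int_game n)" by (rule plus_comm)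
      then show ?thesis using mixed[of m n] True n by (simp add: add.commute)
    next
      case False
      moreover have "nat (- n - m) = nat (- n) + nat (- m)" using False n by simp
      ultimately have "game_plus (int_game n) (int_game m) = int_game (n + m)"
        using n by (simp add: int_game_def conj_add)
      then show ?thesis by simp
    qed
  qed
qed

theorem mainTheorem14:
  fixes TB :: nat and n m :: int
  shows "game_eq TB (game_plus (int_game n) (int_game m)) (int_game (n + m))"
  using sum_int_eq[of _ TB n m] unfolding game_eq_def game_geq_def by auto
end
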